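(* Let $k\ge 3$ be an integer such that every set of $k-1$ distinct positive integers has the LR property, and let $p$ be a positive integer. Let $N=\lfloor (k+1)p/2\rfloor$. Suppose there is no $k$-tuple $v_1,\ldots,v_k\in\{1,\ldots,N\}\setminus p\mathbb{N}$ such that (i) for every subset $S\subseteq\{v_1,\ldots,v_k\}$ of size $k-1$ we have $\gcd(S\cup\{(k+1)p\})=1$, and (ii) $\{v_1,\ldots,v_k\}$ covers $\{1,\ldots,N\}$. Then for every set $\{v_1,\ldots,v_k\}$ of $k$ distinct integers that does not have the LR property, $p$ divides $\prod_{i=1}^k v_i$.
   Context: For a real number $x$, $\|x\|$ denotes the distance from $x$ to the nearest integer. A finite set $S$ of $m$ integers has the LR (lonely runner) property if there exists a real $t$ such that $\|tv\|\ge \frac{1}{m+1}$ for all $v\in S$. Given $k$ and $p$, an integer $v$ covers an integer $j$ if $\left\|\frac{jv}{(k+1)p}\right\|<\frac{1}{k+1}$; a set $\{v_1,\ldots,v_i\}$ covers a set $T$ of integers if every element of $T$ is covered by at least one $v_l$. $p\mathbb{N}$ denotes the set of multiples of $p$. The hypothesis "every set of $k-1$ distinct positive integers has the LR property" is what the paper calls "the lonely runner conjecture holds for $k-1$". *)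

theory Defs
  imports Complex_Main
begin

definition dist_int :: "real \<Rightarrow> real" where
  "dist_int x = min (x - of_int \<lfloor>x\<rfloor>) (of_int \<lceil>x\<rceil> - x)"

definition LR :: "int set \<Rightarrow> bool" where
  "LR S \<longleftrightarrow> (\<exists>t::real. \<forall>v\<in>S. dist_int (t * of_int v) \<ge> 1 / (real (card S) + 1))"

definition covers :: "nat \<Rightarrow> nat \<Rightarrow> int \<Rightarrow> int \<Rightarrow> bool" where
  "covers k p v j \<longleftrightarrow>
     dist_int (of_int j * of_int v / (real (k + 1) * real p)) < 1 / (real k + 1)"

end

theory Submission imports Defs begin

lemma dist_int_shift: "dist_int (x + of_int n) = dist_int x"
  unfolding dist_int_def by simp
lemma dist_int_neg: "dist_int (- x) = dist_int x"
proof -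
  have "- x - of_int \<lfloor>- x\<rfloor> = of_int \<lceil>x\<rceil> - x" by (simp add: floor_minus)
  moreover have "of_int \<lceil>- x\<rceil> - (- x) = x - of_int \<lfloor>x\<rfloor>" by (simp add: ceiling_minus)
  ultimately show ?thesis unfolding dist_int_def by (simp add: min.commute)
qed
lemma dist_int_mid: "1/4 \<le> x \<Longrightarrow> x \<le> 3/4 \<Longrightarrow> dist_int x \<ge> 1/4"
proof -
  assume a: "1/4 \<le> x" "x \<le> 3/4"
  have "\<lfloor>x\<rfloor> = 0" using a by (intro floor_unique) auto
  moreover have "\<lceil>x\<rceil> = 1" using a by (intro ceiling_unique) auto
  ultimately show ?thesis using a unfolding dist_int_def by simp
qed

lemma dist_red:
  fixes M v j :: int
  assumes "M > 0"
  shows "dist_int (of_int j * of_int (min (v mod M) (M - v mod M)) / of_int M)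
       = dist_int (of_int j * of_int v / of_int M)"
proof -
  define q r where "q = v div M" and "r = v mod M"
  have v: "v = M * q + r" using q_def r_def by simp
  have Mr: "real_of_int M \<noteq> 0" using assms by simp
  show ?thesis
  proof (cases "r \<le> M - r")
    case True
    then have "min (v mod M) (M - v mod M) = r" using r_def by simp
    moreover have "real_of_int j * of_int v / of_int M = of_int j * of_int r / of_int M + of_int j * of_int q"
      using assms by (simp add: v algebra_simps add_divide_distrib)
    moreover have "real_of_int j * of_int r / of_int M = of_int j * of_int r / of_int M + of_int j * of_int q + of_int (- (j*q))"
      by simp
    ultimately show ?thesis by (metis dist_int_shift of_int_mult)
  next
    case False
    then have "min (v mod M) (M - v mod M) = M - r" using r_def by simp
    moreover have "real_of_int j * of_int v / of_int M = of_int j * of_int r / of_int M + of_int j * of_int q"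
      using assms by (simp add: v algebra_simps add_divide_distrib)
    moreover have "real_of_int j * of_int (M - r) / of_int M = of_int j - of_int j * of_int r / of_int M"
      using assms by (simp add: algebra_simps diff_divide_distrib)
    moreover have "real_of_int j - of_int j * of_int r / of_int M = - (of_int j * of_int r / of_int M + of_int j * of_int q) + of_int (j + j*q)"
      by simp
    ultimately show ?thesis by (metis dist_int_shift dist_int_neg of_int_mult)
  qed
qed

lemma shift_exists:
  fixes a d :: int and t :: real
  assumes d2: "d \<ge> 2" and nd: "\<not> d dvd a"
  shows "\<exists>m::int. dist_int ((t + of_int m) * of_int a / of_int d) \<ge> 1/4"
proof -
  define g where "g = gcd a d"
  have gpos: "g > 0" using d2 g_def by simp
  define a' d' where "a' = a div g" and "d' = d div g"
  have a: "a = g * a'" and d: "d = g * d'" using g_def a'_def d'_def by simp_all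
  have d'pos: "d' > 0" using d gpos d2 by (smt (verit) zero_less_mult_iff)
  have "d' \<noteq> 1" using d nd g_def a by (metis dvd_triv_left mult.right_neutral)
  then have d'2: "d' \<ge> 2" using d'pos by simp
  have "gcd a' d' = 1" using g_def a'_def d'_def gpos
    by (metis div_gcd_coprime coprime_iff_gcd_eq_1 gcd_eq_0_iff less_irrefl)
  then obtain x y where xy: "x * a' + y * d' = 1" using bezout_int[of a' d'] by auto
  define r where "r = \<lfloor>of_int d' / 2 + 1/2 - t * of_int a'\<rfloor>"
  have r1: "of_int r \<le> of_int d' / 2 + 1/2 - t * of_int a'" using r_def by linarith
  have r2: "of_int d' / 2 + 1/2 - t * of_int a' < of_int r + 1" using r_def by linarith
  define z where "z = (t * of_int a' + of_int r) / of_int d'"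
  have d'r: "real_of_int d' \<ge> 2" using d'2 by simp
  have dp: "real_of_int d' > 0" using d'r by simp
  have z1: "z \<le> 1/2 + 1/(2 * of_int d')"
  proof -
    have "z \<le> (of_int d' / 2 + 1/2) / of_int d'" unfolding z_def
      using r1 dp by (intro divide_right_mono) auto
    also have "\<dots> = 1/2 + 1/(2 * real_of_int d')" using dp by (simp add: field_simps)
    finally show ?thesis .
  qed
  have z2: "z > 1/2 - 1/(2 * of_int d')"
  proof -
    have "z > (of_int d' / 2 - 1/2) / of_int d'" unfolding z_def
      using r2 dp by (intro divide_strict_right_mono) auto
    moreover have "(real_of_int d' / 2 - 1/2) / of_int d' = 1/2 - 1/(2 * of_int d')" using dp by (simp add: field_simps)
    ultimately show ?thesis by simp
  qed
  have "1/(2 * real_of_int d') \<le> 1/4" using d'r by (simp add: field_simps)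
  then have zd: "dist_int z \<ge> 1/4" using z1 z2 dist_int_mid by simp
  have "(t + of_int (r * x)) * of_int a / of_int d = z + of_int (- (r * y))"
  proof -
    have xa: "real_of_int x * of_int a' = 1 - of_int y * of_int d'"
      using arg_cong[OF xy, of real_of_int] by simp
    have "(t + of_int (r * x)) * of_int a / of_int d = (t + of_int (r * x)) * of_int a' / of_int d'"
      using gpos unfolding a d by simp
    also have "\<dots> = (t * of_int a' + of_int r * (of_int x * of_int a')) / of_int d'"
      by (simp add: algebra_simps)
    also have "\<dots> = (t * of_int a' + of_int r - of_int r * of_int y * of_int d') / of_int d'"
      unfolding xa by (simp add: algebra_simps)
    also have "\<dots> = z - of_int r * of_int y"
      unfolding z_def using dp by (simp add: diff_divide_distrib)
    finally show ?thesis by simp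
  qed
  then show ?thesis using zd by (metis dist_int_shift)
qed


lemma pad:
  fixes k :: nat and A :: "int set"
  assumes hk: "k \<ge> 1"
  and hLR: "\<forall>S :: int set. finite S \<and> card S = k - 1 \<and> (\<forall>v\<in>S. v > 0) \<longrightarrow> LR S"
  and A: "finite A" "card A \<le> k - 1" "\<forall>v\<in>A. v > 0"
  shows "\<exists>t::real. \<forall>v\<in>A. dist_int (t * of_int v) \<ge> 1 / real k"
proof -
  define m where "m = Max (insert 0 A)"
  define B where "B = {m+1 .. m + int (k - 1 - card A)}"
  have mA: "\<forall>v\<in>A. v \<le> m" using A(1) m_def by simp
  have m0: "m \<ge> 0" using A(1) m_def by simp
  have disj: "A \<inter> B = {}" using mA B_def by force
  have cB: "card B = k - 1 - card A" using B_def by simp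
  have fin: "finite (A \<union> B)" using A(1) B_def by simp
  have card: "card (A \<union> B) = k - 1" using card_Un_disjoint[OF A(1) _ disj] cB A(2) B_def by simp
  have pos: "\<forall>v\<in>A \<union> B. v > 0" using A(3) m0 B_def by auto
  have "LR (A \<union> B)" using hLR fin card pos by blast
  then obtain t where t: "\<forall>v\<in>A \<union> B. dist_int (t * of_int v) \<ge> 1 / (real (card (A \<union> B)) + 1)"
    unfolding LR_def by blast
  have "real (card (A \<union> B)) + 1 = real k" using card hk by simp
  then show ?thesis using t by auto
qed

lemma main:
  fixes k p :: nat and V :: "int set"
  assumes hk: "k \<ge> 3"
    and hLR: "\<forall>S :: int set. finite S \<and> card S = k - 1 \<and> (\<forall>v\<in>S. v > 0) \<longrightarrow> LR S"
    and hp: "p > 0"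
    and hno: "\<not> (\<exists>v :: nat \<Rightarrow> int.
                 (\<forall>i<k. v i \<in> {1 .. int (((k + 1) * p) div 2)} \<and> \<not> int p dvd v i) \<and>
                 (\<forall>i<k. Gcd ({v j | j. j < k \<and> j \<noteq> i} \<union> {int ((k + 1) * p)}) = 1) \<and>
                 (\<forall>j\<in>{1 .. int (((k + 1) * p) div 2)}. \<exists>i<k. covers k p (v i) j))"
    and V: "finite V" "card V = k" "\<not> LR V" "Gcd V = 1" "\<forall>v\<in>V. \<not> int p dvd v"
  shows False
proof -
  obtain h where h: "bij_betw h {0..<k} V" using ex_bij_betw_nat_finite[OF V(1)] V(2) by auto
  have himg: "h ` {0..<k} = V" using h by (simp add: bij_betw_def)
  have hV: "\<And>i. i < k \<Longrightarrow> h i \<in> V" using himg by auto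
  have Vh: "\<And>v. v \<in> V \<Longrightarrow> \<exists>i<k. h i = v" using himg by auto
  define M where "M = int ((k+1)*p)"
  have Mpos: "M > 0" using hp unfolding M_def by (simp only: of_nat_0_less_iff) simp
  have pM: "int p dvd M" unfolding M_def by simp
  define u where "u i = min (h i mod M) (M - h i mod M)" for i
  have F1: "\<forall>i<k. u i \<in> {1 .. int (((k + 1) * p) div 2)} \<and> \<not> int p dvd u i"
  proof (intro allI impI)
    fix i assume i: "i < k"
    have np: "\<not> int p dvd h i" using V(5) hV[OF i] by blast
    define r where "r = h i mod M"
    have r0: "0 \<le> r" "r < M" using Mpos r_def by simp_all
    have rnz: "\<not> int p dvd r" using np dvd_mod_iff[OF pM] r_def by simp
    then have "r \<noteq> 0" by auto
    have Md: "int (((k + 1) * p) div 2) = M div 2" using M_def zdiv_int by simp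
    have ui: "u i = min r (M - r)" using u_def r_def by simp
    have "\<not> int p dvd (M - r)"
    proof
      assume "int p dvd (M - r)"
      then have "int p dvd M - (M - r)" using pM by (rule dvd_diff[rotated])
      then show False using rnz by simp
    qed
    then have nd: "\<not> int p dvd min r (M - r)" using rnz by (cases "r \<le> M - r") (simp_all add: min_def)
    have m1: "min r (M - r) \<ge> 1" using r0 \<open>r \<noteq> 0\<close> by simp
    have "2 * min r (M - r) \<le> M" unfolding min_def by simp
    then have "(2 * min r (M - r)) div 2 \<le> M div 2" by (rule zdiv_mono1) simp
    then have m2: "min r (M - r) \<le> M div 2" by simp
    show "u i \<in> {1 .. int (((k + 1) * p) div 2)} \<and> \<not> int p dvd u i"
      unfolding Md ui using m1 m2 nd by simp
  qed
  have F3: "\<forall>j\<in>{1 .. int (((k + 1) * p) div 2)}. \<exists>i<k. covers k p (u i) j"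
  proof
    fix j :: int assume "j \<in> {1 .. int (((k + 1) * p) div 2)}"
    from V(3) have "\<not> (\<forall>v\<in>V. dist_int ((of_int j / of_int M) * of_int v) \<ge> 1/(real (card V)+1))"
      unfolding LR_def by blast
    then obtain v where v: "v \<in> V" "dist_int ((of_int j / of_int M) * of_int v) < 1/(real k + 1)"
      using V(2) by (auto simp: not_le)
    obtain i where i: "i<k" "h i = v" using Vh v(1) by blast
    have Mr: "real_of_int M = real (k+1) * real p" unfolding M_def by (simp add: algebra_simps)
    have e1: "of_int j * of_int (u i) / (real (k+1) * real p) = of_int j * of_int (u i) / of_int M"
      using Mr by simp
    have e2: "dist_int (of_int j * of_int (u i) / of_int M) = dist_int (of_int j * of_int (h i) / of_int M)"
      unfolding u_def by (rule dist_red[OF Mpos])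
    have e3: "of_int j / of_int M * of_int (h i) = of_int j * of_int (h i) / (of_int M :: real)" by simp
    have "covers k p (u i) j" unfolding covers_def e1 e2 e3[symmetric] i(2) using v(2) by simp
    then show "\<exists>i<k. covers k p (u i) j" using i(1) by blast
  qed
  have F2: "\<forall>i<k. Gcd ({u j | j. j < k \<and> j \<noteq> i} \<union> {int ((k + 1) * p)}) = 1"
  proof (intro allI impI)
    fix i assume i: "i<k"
    define G where "G = Gcd ({u j | j. j < k \<and> j \<noteq> i} \<union> {int ((k + 1) * p)})"
    have GM: "G dvd M" unfolding G_def M_def by (rule Gcd_dvd) simp
    have Gu: "\<And>j. j<k \<Longrightarrow> j\<noteq>i \<Longrightarrow> G dvd u j" unfolding G_def by (rule Gcd_dvd) auto
    have G0: "G \<ge> 0" unfolding G_def by simp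
    have "G \<noteq> 0" using GM Mpos by auto
    show "Gcd ({u j | j. j < k \<and> j \<noteq> i} \<union> {int ((k + 1) * p)}) = 1"
    proof (rule ccontr)
      assume "Gcd ({u j | j. j < k \<and> j \<noteq> i} \<union> {int ((k + 1) * p)}) \<noteq> 1"
      then have "G \<noteq> 1" unfolding G_def .
      then have G2: "G \<ge> 2" using G0 \<open>G \<noteq> 0\<close> by linarith
      have Gh: "G dvd h j" if j: "j<k" "j\<noteq>i" for j
      proof (cases "h j mod M \<le> M - h j mod M")
        case True
        then have "G dvd h j mod M" using Gu[OF j] u_def by (simp add: min_def)
        then show ?thesis using dvd_mod_iff[OF GM] by simp
      next
        case False
        then have "G dvd M - h j mod M" using Gu[OF j] u_def by (simp add: min_def)
        then have "G dvd M - (M - h j mod M)" using GM by (rule dvd_diff[rotated])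
        then show ?thesis using dvd_mod_iff[OF GM] by simp
      qed
      have nGi: "\<not> G dvd h i"
      proof
        assume "G dvd h i"
        have "G dvd v" if vV: "v \<in> V" for v
        proof -
          obtain j where "j < k" "h j = v" using Vh[OF vV] by blast
          then show ?thesis using Gh \<open>G dvd h i\<close> by (cases "j = i") auto
        qed
        then have "G dvd Gcd V" by (rule Gcd_greatest)
        then show False using V(4) G2 by (simp add: zdvd1_eq) 
      qed
      define S where "S = (\<lambda>j. \<bar>h j div G\<bar>) ` ({0..<k} - {i})"
      have finS: "finite S" unfolding S_def by simp
      have "card S \<le> card ({0..<k} - {i})" unfolding S_def by (rule card_image_le) simp
      then have cardS: "card S \<le> k - 1" using i by simp
      have posS: "\<forall>s\<in>S. s > 0"
      proof
        fix s assume "s \<in> S"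
        then obtain j where j0: "j \<in> {0..<k} - {i}" and j3: "s = \<bar>h j div G\<bar>"
          unfolding S_def by blast
        then have j: "j < k" "j \<noteq> i" "s = \<bar>h j div G\<bar>" by auto
        have "h j \<noteq> 0" using V(5) hV[OF j(1)] by (metis dvd_0_right)
        then have "h j div G \<noteq> 0" using Gh[OF j(1,2)] by (metis dvd_mult_div_cancel mult_zero_right)
        then show "s > 0" using j(3) by simp
      qed
      have k1: "k \<ge> 1" using hk by simp
      obtain t where t: "\<forall>s\<in>S. dist_int (t * of_int s) \<ge> 1 / real k"
        using pad[OF k1 hLR finS cardS posS] by blast
      obtain m where m: "dist_int ((t + of_int m) * of_int (h i) / of_int G) \<ge> 1/4"
        using shift_exists[OF G2 nGi] by blast
      have thr1: "1/(real (card V) + 1) \<le> 1/4" using V(2) hk by (simp add: field_simps)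
      have thr2: "1/(real (card V) + 1) \<le> 1/real k" using V(2) hk by (simp add: field_simps)
      have "LR V"
        unfolding LR_def
      proof (intro exI[of _ "(t + of_int m) / of_int G"] ballI)
        fix v assume "v \<in> V"
        then obtain j where j: "j<k" "h j = v" using Vh by blast
        show "dist_int ((t + of_int m) / of_int G * of_int v) \<ge> 1/(real (card V) + 1)"
        proof (cases "j = i")
          case True
          have "(t + of_int m) / of_int G * of_int (h i) = (t + of_int m) * of_int (h i) / of_int G" by simp
          then have "dist_int ((t + of_int m) / of_int G * of_int v) \<ge> 1/4" using m j(2) True by simp
          then show ?thesis using thr1 by linarith
        next
          case False
          define q where "q = h j div G"
          have hq: "h j = G * q" using Gh[OF j(1) False] q_def by simp
          have "(t + of_int m) / of_int G * of_int v = t * of_int q + of_int (m * q)"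
            using \<open>G \<noteq> 0\<close> unfolding j(2)[symmetric] hq by (simp add: field_simps)
          then have e: "dist_int ((t + of_int m) / of_int G * of_int v) = dist_int (t * of_int q)"
            by (metis dist_int_shift of_int_mult)
          have "dist_int (t * of_int q) = dist_int (t * of_int \<bar>q\<bar>)"
          proof (cases "q \<ge> 0")
            case True then show ?thesis by simp
          next
            case False
            then have "t * of_int \<bar>q\<bar> = - (t * of_int q)" by simp
            then show ?thesis by (simp add: dist_int_neg)
          qed
          moreover have "\<bar>q\<bar> \<in> S" unfolding S_def q_def
            by (rule image_eqI[of _ _ j]) (use j(1) False in auto)
          moreover have "dist_int (t * of_int \<bar>q\<bar>) \<ge> 1 / real k" using t calculation(2) by blast
          ultimately show ?thesis using e thr2 by linarith
        qed
      qed
      with V(3) show False by simp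
    qed
  qed
  show False by (rule notE[OF hno], rule exI[of _ u], intro conjI F1 F2 F3)
qed

theorem lemma6:
  fixes k p :: nat
  assumes hk: "k \<ge> 3"
    and hLR: "\<forall>S :: int set. finite S \<and> card S = k - 1 \<and> (\<forall>v\<in>S. v > 0) \<longrightarrow> LR S"
    and hp: "p > 0"
    and hno: "\<not> (\<exists>v :: nat \<Rightarrow> int.
                 (\<forall>i<k. v i \<in> {1 .. int (((k + 1) * p) div 2)} \<and> \<not> int p dvd v i) \<and>
                 (\<forall>i<k. Gcd ({v j | j. j < k \<and> j \<noteq> i} \<union> {int ((k + 1) * p)}) = 1) \<and>
                 (\<forall>j\<in>{1 .. int (((k + 1) * p) div 2)}. \<exists>i<k. covers k p (v i) j))"
  shows "\<forall>V :: int set. finite V \<and> card V = k \<and> \<not> LR V \<longrightarrow> int p dvd (\<Prod>V)"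
proof (intro allI impI)
  fix V :: "int set" assume a: "finite V \<and> card V = k \<and> \<not> LR V"
  show "int p dvd (\<Prod>V)"
  proof (rule ccontr)
    assume np: "\<not> int p dvd (\<Prod>V)"
    have fin: "finite V" and cV: "card V = k" and nLR: "\<not> LR V" using a by auto
    have n0: "0 \<notin> V" using np fin by (metis prod_zero_iff dvd_0_right)
    have ne: "V \<noteq> {}" using cV hk by auto
    define g where "g = Gcd V"
    have "g \<noteq> 0" using n0 ne unfolding g_def by auto
    then have g0: "g > 0" unfolding g_def using Gcd_int_greater_eq_0 by (smt (verit))
    have gd: "\<And>v. v\<in>V \<Longrightarrow> g dvd v" unfolding g_def by (rule Gcd_dvd)
    define V' where "V' = (\<lambda>v. v div g) ` V"
    have inj: "inj_on (\<lambda>v. v div g) V"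
      by (rule inj_onI) (metis gd dvd_div_mult_self)
    have "(*) g ` V' = (\<lambda>v. g * (v div g)) ` V" unfolding V'_def image_image by simp
    also have "\<dots> = (\<lambda>v. v) ` V" using gd by (intro image_cong) auto
    finally have V_eq: "V = (*) g ` V'" by simp
    have "g = Gcd ((*) g ` V')" using V_eq g_def by simp
    also have "\<dots> = g * Gcd V'" using g0 by (simp add: Gcd_mult abs_mult)
    finally have G1: "Gcd V' = 1" using g0 by simp
    have cV': "card V' = k" unfolding V'_def using card_image[OF inj] cV by simp
    have finV': "finite V'" unfolding V'_def using fin by simp
    have nLR': "\<not> LR V'"
    proof
      assume "LR V'"
      then obtain t where t: "\<forall>v\<in>V'. dist_int (t * of_int v) \<ge> 1 / (real (card V') + 1)"
        unfolding LR_def by blast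
      have "\<forall>v\<in>V. dist_int (t / of_int g * of_int v) \<ge> 1 / (real (card V) + 1)"
      proof
        fix v assume v: "v \<in> V"
        have vg: "real_of_int v = of_int g * of_int (v div g)"
          using gd[OF v] by (metis dvd_mult_div_cancel of_int_mult)
        have gr: "real_of_int g \<noteq> 0" using g0 by simp
        have "t / of_int g * of_int v = t * of_int (v div g)"
          unfolding vg using gr by simp
        moreover have "v div g \<in> V'" unfolding V'_def using v by simp
        ultimately show "dist_int (t / of_int g * of_int v) \<ge> 1 / (real (card V) + 1)"
          using t cV cV' by simp
      qed
      then show False using nLR unfolding LR_def by blast
    qed
    have pV': "\<Prod>V' = (\<Prod>v\<in>V. v div g)" unfolding V'_def using prod.reindex[OF inj] by simp
    have "\<Prod>V = (\<Prod>v\<in>V. g * (v div g))" using gd by (intro prod.cong) auto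
    also have "\<dots> = g ^ card V * \<Prod>V'" unfolding pV' by (simp add: prod.distrib)
    finally have "\<Prod>V' dvd \<Prod>V" by simp
    then have np': "\<not> int p dvd \<Prod>V'" using np dvd_trans by blast
    have "\<forall>v\<in>V'. \<not> int p dvd v"
    proof
      fix v assume v: "v \<in> V'"
      have "v dvd \<Prod>V'" using dvd_prodI[of V' v "\<lambda>x. x"] finV' v by simp
      then show "\<not> int p dvd v" using np' dvd_trans by blast
    qed
    then show False using main[OF hk hLR hp hno finV' cV' nLR' G1] by blast
  qed
qed

end
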